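(* Let $\mathcal X$ be a finite set (e.g. $\mathcal X=\mathcal V^L$), let $P,Q$ be probability distributions on $\mathcal X$, let $\delta>0$, let $\mathcal X_{\mathrm{Trunc}}=\{\mathbf x\in\mathcal X: Q(\mathbf x)\ge\delta\}$ and $\Delta=1-P(\mathcal X_{\mathrm{Trunc}})$, and assume $\Delta<1$. Let $P^{\mathrm{Trunc}}=P(\cdot\mid \mathcal X_{\mathrm{Trunc}})$ and $$\mathcal L^{\Delta}_{\mathrm{Trunc}}=-\mathbb E_{\mathbf x\sim P}\big[\mathbf 1_{\{Q(\mathbf x)\ge\delta\}}\log Q(\mathbf x)\big].$$ For any $\epsilon>0$, if $\mathcal L^{\Delta}_{\mathrm{Trunc}}\le \epsilon+(1-\Delta)H(P^{\mathrm{Trunc}})$, then there exists $\lambda\in(0,\infty)$ such that the precision–recall pair $(\alpha,\beta)=(\alpha_\lambda(P\Vert Q),\beta_\lambda(P\Vert Q))$ satisfies $\beta\ge (1-\Delta)-\sqrt{\epsilon}$ and $\alpha\ge 1-\sqrt{\frac{\epsilon}{2(1-\Delta)}}$.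
   Context: $H$ denotes Shannon entropy (natural logarithm). For $\lambda\in(0,\infty)$, $\alpha_\lambda(P\Vert Q)=\sum_{\mathbf x}\min(\lambda P(\mathbf x),Q(\mathbf x))$ and $\beta_\lambda(P\Vert Q)=\sum_{\mathbf x}\min(P(\mathbf x),Q(\mathbf x)/\lambda)$. When $Q$ is autoregressive on sequences, $\log Q(\mathbf x)=\sum_{l=1}^L\log Q(x_l\mid\mathbf x_{<l})$, so the loss above is the "Trunc" loss $-\mathbb E_{\mathbf x\sim P}[\sum_l \mathbf 1_{\{Q(\mathbf x)\ge\delta\}}\log Q(x_l\mid \mathbf x_{<l})]$. *)

theory Defs
  imports Complex_Main
begin

text \<open>Distributions on a finite set X are functions 'a => real; all sums range over X.
  Shannon entropy with natural log; ln 0 = 0 in Isabelle, giving the convention 0 log 0 = 0.\<close>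

definition is_distribution :: "'a set \<Rightarrow> ('a \<Rightarrow> real) \<Rightarrow> bool" where
  "is_distribution X P \<longleftrightarrow> (\<forall>x\<in>X. P x \<ge> 0) \<and> (\<Sum>x\<in>X. P x) = 1"

definition shannon_entropy :: "'a set \<Rightarrow> ('a \<Rightarrow> real) \<Rightarrow> real" where
  "shannon_entropy X P = - (\<Sum>x\<in>X. P x * ln (P x))"

definition alpha_pr :: "'a set \<Rightarrow> real \<Rightarrow> ('a \<Rightarrow> real) \<Rightarrow> ('a \<Rightarrow> real) \<Rightarrow> real" where
  "alpha_pr X lam P Q = (\<Sum>x\<in>X. min (lam * P x) (Q x))"

definition beta_pr :: "'a set \<Rightarrow> real \<Rightarrow> ('a \<Rightarrow> real) \<Rightarrow> ('a \<Rightarrow> real) \<Rightarrow> real" where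
  "beta_pr X lam P Q = (\<Sum>x\<in>X. min (P x) (Q x / lam))"

definition cond_dist :: "'a set \<Rightarrow> ('a \<Rightarrow> real) \<Rightarrow> 'a \<Rightarrow> real" where
  "cond_dist A P = (\<lambda>x. if x \<in> A then P x / (\<Sum>y\<in>A. P y) else 0)"

end

theory Submission
  imports Defs
begin

lemma binpinsker_lt1:
  fixes a b :: real
  assumes "0 < b" "b < a" "a < 1"
  shows "2 * (a - b)^2 \<le> a * (ln a - ln b) + (1 - a) * (ln (1 - a) - ln (1 - b))"
proof -
  define g where "g t = a * (ln a - ln t) + (1 - a) * (ln (1 - a) - ln (1 - t)) - 2 * (a - t)^2" for t :: real
  have "g a \<le> g b"
  proof (rule DERIV_nonpos_imp_nonincreasing[of b a g])
    show "b \<le> a" using assms by simp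
    fix t assume t: "b \<le> t" "t \<le> a"
    have t0: "0 < t" "t < 1" using t assms by auto
    have D: "DERIV g t :> (a * (- (1 / t)) + (1 - a) * (- (- 1 / (1 - t))) - 2 * (2 * (a - t) * (-1)))"
      unfolding g_def using t0
      by (auto intro!: derivative_eq_intros)
    have q: "t * (1 - t) \<le> 1/4" using zero_le_power2[of "t - 1/2"] by (simp add: power2_eq_square algebra_simps)
    have "a * (- (1 / t)) + (1 - a) * (- (- 1 / (1 - t))) - 2 * (2 * (a - t) * (-1))
          = (a - t) * (4 - 1 / (t * (1 - t)))"
      using t0 by (simp add: field_simps)
    also have "\<dots> \<le> 0"
    proof -
      have "1 / (t * (1 - t)) \<ge> 4"
        using q t0 by (simp add: field_simps)
      then show ?thesis using t by (intro mult_nonneg_nonpos) auto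
    qed
    finally show "\<exists>y. DERIV g t :> y \<and> y \<le> 0" using D by blast
  qed
  moreover have "g a = 0" by (simp add: g_def)
  ultimately show ?thesis by (simp add: g_def)
qed

lemma binpinsker_eq1:
  fixes b :: real
  assumes "0 < b" "b < 1"
  shows "2 * (1 - b)^2 \<le> - ln b"
proof -
  define g where "g t = - ln t - 2 * (1 - t)^2" for t :: real
  have "g 1 \<le> g b"
  proof (rule DERIV_nonpos_imp_nonincreasing[of b 1 g])
    show "b \<le> 1" using assms by simp
    fix t assume t: "b \<le> t" "t \<le> 1"
    have t0: "0 < t" using t assms by auto
    have D: "DERIV g t :> (- (1 / t) - 2 * (2 * (1 - t) * (-1)))"
      unfolding g_def using t0
      by (auto intro!: derivative_eq_intros)
    have "- (1 / t) - 2 * (2 * (1 - t) * (-1)) = - ((1 - 2*t)^2 / t)"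
      using t0 by (simp add: field_simps power2_eq_square)
    also have "\<dots> \<le> 0" using t0 by simp
    finally show "\<exists>y. DERIV g t :> y \<and> y \<le> 0" using D by blast
  qed
  moreover have "g 1 = 0" by (simp add: g_def)
  ultimately show ?thesis by (simp add: g_def)
qed

lemma binpinsker:
  fixes a b :: real
  assumes "0 < b" "b < a" "a \<le> 1"
  shows "2 * (a - b)^2 \<le> a * ln (a / b) + (1 - a) * ln ((1 - a) / (1 - b))"
proof (cases "a = 1")
  case True
  then show ?thesis using binpinsker_eq1[of b] assms by (simp add: ln_div)
next
  case False
  then have "a < 1" using assms by simp
  then show ?thesis using binpinsker_lt1[of b a] assms by (simp add: ln_divide_pos)
qed

lemma logsum_pt:
  fixes p q a b :: real
  assumes "p \<ge> 0" "q > 0" "a > 0" "b > 0"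
  shows "p - q * a / b \<le> p * ln (p / q) - p * ln (a / b)"
proof (cases "p = 0")
  case True then show ?thesis using assms by simp
next
  case False
  then have p: "p > 0" using assms by simp
  have "ln ((q * a) / (p * b)) \<le> (q * a) / (p * b) - 1"
    using p assms by (intro ln_le_minus_one) simp
  moreover have "ln ((q * a) / (p * b)) = - (ln (p / q) - ln (a / b))"
    using p assms by (simp add: ln_divide_pos ln_mult)
  ultimately have "1 - (q * a) / (p * b) \<le> ln (p / q) - ln (a / b)" by linarith
  then have "p * (1 - (q * a) / (p * b)) \<le> p * (ln (p / q) - ln (a / b))"
    using p by (intro mult_left_mono) auto
  then show ?thesis using p by (simp add: field_simps)
qed

lemma logsum:
  fixes p q :: "'a \<Rightarrow> real"
  assumes "finite S" "\<And>x. x \<in> S \<Longrightarrow> q x > 0" "\<And>x. x \<in> S \<Longrightarrow> p x \<ge> 0"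
  shows "(\<Sum>x\<in>S. p x) * ln ((\<Sum>x\<in>S. p x) / (\<Sum>x\<in>S. q x)) \<le> (\<Sum>x\<in>S. p x * ln (p x / q x))"
proof (cases "(\<Sum>x\<in>S. p x) = 0")
  case True
  then have "\<forall>x\<in>S. p x = 0" using sum_nonneg_eq_0_iff[OF assms(1)] assms(3) by blast
  then show ?thesis using True by simp
next
  case False
  define a where "a = (\<Sum>x\<in>S. p x)"
  define b where "b = (\<Sum>x\<in>S. q x)"
  have a: "a > 0" using False assms(3) sum_nonneg[of S p] unfolding a_def by force
  have "S \<noteq> {}" using False by auto
  then have b: "b > 0" unfolding b_def using assms by (intro sum_pos) auto
  have "(\<Sum>x\<in>S. p x - q x * a / b) \<le> (\<Sum>x\<in>S. p x * ln (p x / q x) - p x * ln (a / b))"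
    using assms a b by (intro sum_mono logsum_pt) auto
  moreover have "(\<Sum>x\<in>S. p x - q x * a / b) = 0"
    using b by (simp add: sum_subtractf sum_divide_distrib[symmetric] sum_distrib_right[symmetric] a_def[symmetric] b_def[symmetric])
  moreover have "(\<Sum>x\<in>S. p x * ln (p x / q x) - p x * ln (a / b)) = (\<Sum>x\<in>S. p x * ln (p x / q x)) - a * ln (a / b)"
    by (simp add: sum_subtractf sum_distrib_right[symmetric] a_def)
  ultimately show ?thesis unfolding a_def b_def by linarith
qed

lemma pinsker_sub:
  fixes R Q :: "'a \<Rightarrow> real"
  assumes fin: "finite A" and R0: "\<And>x. x \<in> A \<Longrightarrow> R x \<ge> 0" and R1: "(\<Sum>x\<in>A. R x) = 1"
    and Qp: "\<And>x. x \<in> A \<Longrightarrow> Q x > 0" and Q1: "(\<Sum>x\<in>A. Q x) \<le> 1"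
  shows "2 * (\<Sum>x\<in>A. max 0 (R x - Q x))^2 \<le> (\<Sum>x\<in>A. R x * ln (R x / Q x))"
proof -
  define B where "B = {x\<in>A. Q x < R x}"
  define C where "C = A - B"
  have BA: "B \<subseteq> A" and finB: "finite B" and finC: "finite C" and disj: "B \<inter> C = {}" and un: "A = B \<union> C"
    using fin by (auto simp: B_def C_def)
  have split: "(\<Sum>x\<in>A. f x) = (\<Sum>x\<in>B. f x) + (\<Sum>x\<in>C. f x)" for f :: "'a \<Rightarrow> real"
    using sum.union_disjoint[OF finB finC disj, of f] un by simp
  define a where "a = (\<Sum>x\<in>B. R x)"
  define b where "b = (\<Sum>x\<in>B. Q x)"
  define b' where "b' = (\<Sum>x\<in>C. Q x)"
  have RC: "(\<Sum>x\<in>C. R x) = 1 - a" using split[of R] R1 a_def by simp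
  have bb: "b + b' \<le> 1" using split[of Q] Q1 b_def b'_def by simp
  have b'0: "b' \<ge> 0" unfolding b'_def using Qp C_def by (intro sum_nonneg) (auto intro: less_imp_le)
  have b0: "b \<ge> 0" unfolding b_def using Qp BA by (intro sum_nonneg) (auto intro: less_imp_le)
  have T: "(\<Sum>x\<in>A. max 0 (R x - Q x)) = a - b"
  proof -
    have "(\<Sum>x\<in>A. max 0 (R x - Q x)) = (\<Sum>x\<in>B. max 0 (R x - Q x)) + (\<Sum>x\<in>C. max 0 (R x - Q x))"
      by (rule split)
    also have "(\<Sum>x\<in>B. max 0 (R x - Q x)) = (\<Sum>x\<in>B. R x - Q x)"
      by (rule sum.cong) (auto simp: B_def)
    also have "(\<Sum>x\<in>C. max 0 (R x - Q x)) = 0"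
      by (rule sum.neutral) (auto simp: B_def C_def)
    finally show ?thesis by (simp add: sum_subtractf a_def b_def)
  qed
  have LB: "a * ln (a / b) \<le> (\<Sum>x\<in>B. R x * ln (R x / Q x))"
    unfolding a_def b_def using finB BA Qp R0 by (intro logsum) auto
  have LC: "(1 - a) * ln ((1 - a) / b') \<le> (\<Sum>x\<in>C. R x * ln (R x / Q x))"
    unfolding RC[symmetric] b'_def using finC Qp R0 by (intro logsum) (auto simp: C_def)
  have D: "(\<Sum>x\<in>A. R x * ln (R x / Q x)) \<ge> a * ln (a / b) + (1 - a) * ln ((1 - a) / b')"
    using split[of "\<lambda>x. R x * ln (R x / Q x)"] LB LC by simp
  show ?thesis
  proof (cases "B = {}")
    case True
    then have "a = 0" "b = 0" by (auto simp: a_def b_def)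
    moreover have "ln (1 / b') \<ge> 0"
    proof (cases "b' = 0")
      case False
      then show ?thesis using b'0 bb \<open>b = 0\<close> by (intro ln_ge_zero) (simp add: field_simps)
    qed simp
    ultimately show ?thesis using D T by simp
  next
    case False
    have bpos: "b > 0" unfolding b_def using False finB BA Qp by (intro sum_pos) auto
    have ba: "b < a" unfolding a_def b_def using False finB by (intro sum_strict_mono) (auto simp: B_def)
    have RC0: "(\<Sum>x\<in>C. R x) \<ge> 0" using R0 by (intro sum_nonneg) (auto simp: C_def)
    have a1: "a \<le> 1" using RC RC0 by simp
    have second: "(1 - a) * ln ((1 - a) / (1 - b)) \<le> (1 - a) * ln ((1 - a) / b')"
    proof (cases "a = 1")
      case False
      then have a1': "a < 1" using a1 by simp
      have "C \<noteq> {}" using RC a1' by auto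
      then have b'p: "b' > 0" unfolding b'_def using finC Qp by (intro sum_pos) (auto simp: C_def)
      have "(1 - a) / (1 - b) \<le> (1 - a) / b'"
        using a1' b'p bb by (intro divide_left_mono) auto
      then have "ln ((1 - a) / (1 - b)) \<le> ln ((1 - a) / b')"
        using a1' ba b'p by (subst ln_le_cancel_iff) auto
      then show ?thesis using a1' by (intro mult_left_mono) auto
    qed simp
    show ?thesis unfolding T using binpinsker[OF bpos ba a1] second D by linarith
  qed
qed


theorem proposition5p2:
  fixes X :: "'a set" and P Q :: "'a \<Rightarrow> real" and \<delta> \<epsilon> :: real
  assumes "finite X"
    and "is_distribution X P" and "is_distribution X Q"
    and "\<delta> > 0"
    and "1 - (\<Sum>x\<in>{x\<in>X. Q x \<ge> \<delta>}. P x) < 1"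
    and "\<epsilon> > 0"
    and "- (\<Sum>x\<in>X. P x * (if Q x \<ge> \<delta> then ln (Q x) else 0))
          \<le> \<epsilon> + (1 - (1 - (\<Sum>x\<in>{x\<in>X. Q x \<ge> \<delta>}. P x)))
                 * shannon_entropy X (cond_dist {x\<in>X. Q x \<ge> \<delta>} P)"
  shows "\<exists>lam>0. beta_pr X lam P Q \<ge> (1 - (1 - (\<Sum>x\<in>{x\<in>X. Q x \<ge> \<delta>}. P x))) - sqrt \<epsilon>
             \<and> alpha_pr X lam P Q \<ge> 1 - sqrt (\<epsilon> / (2 * (1 - (1 - (\<Sum>x\<in>{x\<in>X. Q x \<ge> \<delta>}. P x)))))"
proof -
  define A where "A = {x\<in>X. Q x \<ge> \<delta>}"
  define p where "p = (\<Sum>x\<in>A. P x)"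
  define R where "R x = P x / p" for x
  have finX: "finite X" by fact
  have P0: "\<And>x. x \<in> X \<Longrightarrow> P x \<ge> 0" and P1: "(\<Sum>x\<in>X. P x) = 1"
    using assms(2) by (auto simp: is_distribution_def)
  have Q0: "\<And>x. x \<in> X \<Longrightarrow> Q x \<ge> 0" and Q1: "(\<Sum>x\<in>X. Q x) = 1"
    using assms(3) by (auto simp: is_distribution_def)
  have AX: "A \<subseteq> X" and finA: "finite A" using finX by (auto simp: A_def)
  have Qp: "\<And>x. x \<in> A \<Longrightarrow> Q x > 0" using assms(4) by (auto simp: A_def)
  have pp: "p > 0" using assms(5) by (simp add: p_def A_def)
  have pp1: "1 - (1 - p) = p" by simp
  have R0: "\<And>x. x \<in> A \<Longrightarrow> R x \<ge> 0" using P0 AX pp by (auto simp: R_def)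
  have R1: "(\<Sum>x\<in>A. R x) = 1" using pp by (simp add: R_def sum_divide_distrib[symmetric] p_def[symmetric])
  have QA1: "(\<Sum>x\<in>A. Q x) \<le> 1" using Q1 sum_mono2[OF finX AX, of Q] Q0 by auto
  have ent: "shannon_entropy X (cond_dist A P) = - (\<Sum>x\<in>A. R x * ln (R x))"
  proof -
    have "(\<Sum>x\<in>X. cond_dist A P x * ln (cond_dist A P x)) = (\<Sum>x\<in>X. if x \<in> A then R x * ln (R x) else 0)"
      by (rule sum.cong) (auto simp: cond_dist_def R_def p_def)
    also have "\<dots> = (\<Sum>x\<in>X \<inter> A. R x * ln (R x))" by (rule sum.inter_restrict[OF finX, symmetric])
    also have "X \<inter> A = A" using AX by auto
    finally show ?thesis by (simp add: shannon_entropy_def)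
  qed
  have loss: "(\<Sum>x\<in>X. P x * (if Q x \<ge> \<delta> then ln (Q x) else 0)) = (\<Sum>x\<in>A. P x * ln (Q x))"
  proof -
    have "(\<Sum>x\<in>X. P x * (if Q x \<ge> \<delta> then ln (Q x) else 0)) = (\<Sum>x\<in>X. if x \<in> A then P x * ln (Q x) else 0)"
      by (rule sum.cong) (auto simp: A_def)
    also have "\<dots> = (\<Sum>x\<in>X \<inter> A. P x * ln (Q x))" by (rule sum.inter_restrict[OF finX, symmetric])
    also have "X \<inter> A = A" using AX by auto
    finally show ?thesis .
  qed
  have hyp: "- (\<Sum>x\<in>A. P x * ln (Q x)) \<le> \<epsilon> + p * (- (\<Sum>x\<in>A. R x * ln (R x)))"
    using assms(7) unfolding loss A_def[symmetric] p_def[symmetric] pp1 ent .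
  define D where "D = (\<Sum>x\<in>A. R x * ln (R x / Q x))"
  have pD: "p * D = p * (\<Sum>x\<in>A. R x * ln (R x)) - (\<Sum>x\<in>A. P x * ln (Q x))"
  proof -
    have "p * D = (\<Sum>x\<in>A. P x * ln (R x / Q x))"
      unfolding D_def sum_distrib_left using pp by (intro sum.cong) (auto simp: R_def)
    also have "\<dots> = (\<Sum>x\<in>A. P x * ln (R x) - P x * ln (Q x))"
    proof (rule sum.cong)
      fix x assume x: "x \<in> A"
      show "P x * ln (R x / Q x) = P x * ln (R x) - P x * ln (Q x)"
      proof (cases "P x = 0")
        case False
        then have "R x > 0" using R0[OF x] pp by (auto simp: R_def field_simps)
        then show ?thesis using Qp[OF x] by (simp add: ln_divide_pos algebra_simps)
      qed simp
    qed simp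
    also have "\<dots> = p * (\<Sum>x\<in>A. R x * ln (R x)) - (\<Sum>x\<in>A. P x * ln (Q x))"
      unfolding sum_subtractf sum_distrib_left using pp by (simp add: R_def)
    finally show ?thesis .
  qed
  have pDe: "p * D \<le> \<epsilon>" using pD hyp by linarith
  define T where "T = (\<Sum>x\<in>A. max 0 (R x - Q x))"
  have T0: "T \<ge> 0" unfolding T_def by (intro sum_nonneg) auto
  have TD: "2 * T^2 \<le> D" unfolding T_def D_def by (rule pinsker_sub[OF finA R0 R1 Qp QA1])
  have T2: "T^2 \<le> \<epsilon> / (2 * p)"
  proof -
    have "p * (2 * T^2) \<le> \<epsilon>" using TD pDe pp by (smt (verit) mult_left_mono)
    then show ?thesis using pp by (simp add: field_simps)
  qed
  have Tle: "T \<le> sqrt (\<epsilon> / (2 * p))" by (rule real_le_rsqrt[OF T2])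
  have pT: "p * T \<le> sqrt \<epsilon>"
  proof (rule real_le_rsqrt)
    have p1: "p \<le> 1" using P1 sum_mono2[OF finX AX, of P] P0 by (auto simp: p_def)
    have "(p * T)^2 = p^2 * T^2" by (simp add: power_mult_distrib)
    also have "\<dots> \<le> p^2 * (\<epsilon> / (2 * p))" using T2 by (intro mult_left_mono) auto
    also have "\<dots> = p * \<epsilon> / 2" using pp by (simp add: power2_eq_square field_simps)
    also have "\<dots> \<le> \<epsilon>" using p1 assms(6) mult_right_mono[OF p1, of \<epsilon>] by simp
    finally show "(p * T)^2 \<le> \<epsilon>" .
  qed
  have minsum: "(\<Sum>x\<in>A. min (R x) (Q x)) = 1 - T"
  proof -
    have "(\<Sum>x\<in>A. min (R x) (Q x)) = (\<Sum>x\<in>A. R x - max 0 (R x - Q x))"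
      by (rule sum.cong) auto
    then show ?thesis by (simp add: sum_subtractf R1 T_def)
  qed
  have alpha: "alpha_pr X (1/p) P Q \<ge> 1 - T"
  proof -
    have "(\<Sum>x\<in>A. min (R x) (Q x)) \<le> (\<Sum>x\<in>X. min (1/p * P x) (Q x))"
    proof -
      have "(\<Sum>x\<in>A. min (R x) (Q x)) = (\<Sum>x\<in>A. min (1/p * P x) (Q x))" by (simp add: R_def)
      also have "\<dots> \<le> (\<Sum>x\<in>X. min (1/p * P x) (Q x))"
        using P0 Q0 pp by (intro sum_mono2[OF finX AX]) auto
      finally show ?thesis .
    qed
    then show ?thesis using minsum by (simp add: alpha_pr_def)
  qed
  have beta: "beta_pr X (1/p) P Q \<ge> p * (1 - T)"
  proof -
    have "p * (1 - T) = (\<Sum>x\<in>A. p * min (R x) (Q x))" unfolding minsum[symmetric] by (simp add: sum_distrib_left)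
    also have "\<dots> = (\<Sum>x\<in>A. min (P x) (Q x / (1/p)))"
      using pp by (intro sum.cong) (auto simp: R_def min_mult_distrib_left mult.commute)
    also have "\<dots> \<le> (\<Sum>x\<in>X. min (P x) (Q x / (1/p)))"
      using P0 Q0 pp by (intro sum_mono2[OF finX AX]) auto
    finally show ?thesis by (simp add: beta_pr_def)
  qed
  show ?thesis
    unfolding A_def[symmetric] p_def[symmetric] pp1
  proof (intro exI[of _ "1/p"] conjI)
    show "0 < 1/p" using pp by simp
    show "p - sqrt \<epsilon> \<le> beta_pr X (1/p) P Q" using beta pT by (simp add: algebra_simps)
    show "1 - sqrt (\<epsilon> / (2 * p)) \<le> alpha_pr X (1/p) P Q" using alpha Tle by linarith
  qed
qed

end
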